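(* Let $X$ be a K3 surface over a number field $K$, $\bar X=X\times_K\bar K$ for an algebraic closure $\bar K$, let $\ell>44$ be a prime, and let $G_{\ell,X,K}\subset\mathrm{Aut}_{\mathbb{Z}_\ell}(H^2(\bar X,\mathbb{Z}_\ell))$ be the image of $\mathrm{Gal}(\bar K/K)$ under the $\ell$-adic representation on $H^2(\bar X,\mathbb{Z}_\ell)$ (a free $\mathbb{Z}_\ell$-module of rank $22$). Suppose that a prime $p$ and an element $u\in G_{\ell,X,K}$ satisfy: (i) $\ell$ divides $p-1$; (ii) $u\in\mathrm{Id}+\ell\cdot\mathrm{End}_{\mathbb{Z}_\ell}(H^2(\bar X,\mathbb{Z}_\ell))$; (iii) the characteristic polynomial $P_u(t)=\det(1-tu,H^2(\bar X,\mathbb{Q}_\ell))=1+b_1t+\cdots+b_{22}t^{22}$ lies in $\mathbb{Z}[t]$; (iv) writing $P_u(t)=\prod_{i=1}^{22}(1-\beta_it)$, all $\beta_1,\dots,\beta_{22}$ have the same archimedean absolute value $p$; (v) $b_1$ is divisible by $p$. Then $p^{-1}u$ is a unipotent linear operator on $H^2(\bar X,\mathbb{Q}_\ell)=H^2(\bar X,\mathbb{Z}_\ell)\otimes_{\mathbb{Z}_\ell}\mathbb{Q}_\ell$. In particular, if $u$ is semisimple then $u=p\cdot\mathrm{Id}$.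
   Context: A K3 surface over a field is an (absolutely) irreducible smooth projective surface with trivial canonical sheaf and $H^1(\mathcal{O})=0$. $\mathrm{Id}$ denotes the identity automorphism of $H^2(\bar X,\mathbb{Z}_\ell)$. Condition (iv) means the absolute value is $p$ under every complex embedding of the algebraic numbers $\beta_i$. *)

theory Defs
  imports "Jordan_Normal_Form.Determinant" "HOL-Number_Theory.Cong" Complex_Main
begin

text \<open>A Z_l-linear endomorphism of Z_l^N (N = rank of H^2 = 22, after choosing a
  Z_l-basis) is represented by a compatible system of integer matrices U n,
  U n being the reduction modulo l^n.\<close>

definition zl_matrix :: "nat \<Rightarrow> nat \<Rightarrow> (nat \<Rightarrow> int mat) \<Rightarrow> bool" where
  "zl_matrix l N U \<longleftrightarrow> (\<forall>n. U n \<in> carrier_mat N N) \<and>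
     (\<forall>n i j. i < N \<longrightarrow> j < N \<longrightarrow> [U (Suc n) $$ (i,j) = U n $$ (i,j)] (mod (int l ^ n)))"

definition mat_cong :: "int mat \<Rightarrow> int mat \<Rightarrow> int \<Rightarrow> bool" where
  "mat_cong A B m \<longleftrightarrow> (\<forall>i j. i < dim_row A \<longrightarrow> j < dim_col A \<longrightarrow> [A $$ (i,j) = B $$ (i,j)] (mod m))"

definition det_one_minus_t :: "int mat \<Rightarrow> int poly" where
  "det_one_minus_t A = det (1\<^sub>m (dim_row A) - map_mat (\<lambda>a. [:0, a:]) A)"

text \<open>For P(t) = sum_{k<=N} b_k t^k = prod_{i=1}^N (1 - beta_i t), the beta_i are the
  roots of t^N P(1/t).\<close>
definition recip_poly :: "nat \<Rightarrow> int poly \<Rightarrow> int poly" where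
  "recip_poly N P = (\<Sum>k\<le>N. monom (coeff P k) (N - k))"

end

theory Submission
  imports Defs "HOL-Computational_Algebra.Fundamental_Theorem_Algebra" "Jordan_Normal_Form.Char_Poly"
begin


lemma dvd_prod_diff:
  fixes f g :: "'b \<Rightarrow> 'a::comm_ring_1"
  assumes "finite S" "\<And>i. i \<in> S \<Longrightarrow> c dvd f i - g i"
  shows "c dvd prod f S - prod g S"
  using assms
proof (induction S rule: finite_induct)
  case empty then show ?case by simp
next
  case (insert a F)
  have e: "prod f (insert a F) - prod g (insert a F) = f a * (prod f F - prod g F) + (f a - g a) * prod g F"
    using insert by (simp add: algebra_simps)
  show ?case unfolding e using insert by (intro dvd_add dvd_mult dvd_mult2) auto
qed

lemma det_dvd_diff:
  fixes A B :: "'a::comm_ring_1 mat"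
  assumes A: "A \<in> carrier_mat n n" and B: "B \<in> carrier_mat n n"
    and d: "\<And>i j. i < n \<Longrightarrow> j < n \<Longrightarrow> c dvd A $$ (i,j) - B $$ (i,j)"
  shows "c dvd det A - det B"
proof -
  have "det A - det B = (\<Sum>p\<in>{p. p permutes {0..<n}}. signof p * (\<Prod>i = 0..<n. A $$ (i, p i)) - signof p * (\<Prod>i = 0..<n. B $$ (i, p i)))"
    unfolding det_def'[OF A] det_def'[OF B] by (simp add: sum_subtractf)
  also have "c dvd \<dots>"
  proof (rule dvd_sum)
    fix p assume p: "p \<in> {p. p permutes {0..<n}}"
    have "c dvd (\<Prod>i = 0..<n. A $$ (i, p i)) - (\<Prod>i = 0..<n. B $$ (i, p i))"
      by (rule dvd_prod_diff) (use p d permutes_in_image in \<open>auto\<close>)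
    then show "c dvd signof p * (\<Prod>i = 0..<n. A $$ (i, p i)) - signof p * (\<Prod>i = 0..<n. B $$ (i, p i))"
      by (metis dvd_mult right_diff_distrib)
  qed
  finally show ?thesis .
qed

definition Mt :: "nat \<Rightarrow> int mat \<Rightarrow> int poly mat" where
  "Mt N A = 1\<^sub>m N - map_mat (\<lambda>a. [:0, a:]) A"

lemma Mt_carrier: "A \<in> carrier_mat N N \<Longrightarrow> Mt N A \<in> carrier_mat N N"
  unfolding Mt_def by auto

lemma Mt_index: "A \<in> carrier_mat N N \<Longrightarrow> i < N \<Longrightarrow> j < N \<Longrightarrow>
   Mt N A $$ (i,j) = (if i = j then 1 else 0) - [:0, A $$ (i,j):]"
  unfolding Mt_def by auto

lemma det_Mt: "A \<in> carrier_mat N N \<Longrightarrow> det_one_minus_t A = det (Mt N A)"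
  unfolding Mt_def det_one_minus_t_def by auto

lemma coeff0_det: assumes A: "A \<in> carrier_mat N N"
  shows "coeff (det_one_minus_t A) 0 = 1"
proof -
  have "[:0,1:] dvd det (Mt N A) - det (1\<^sub>m N)"
  proof (rule det_dvd_diff[OF Mt_carrier[OF A]])
    fix i j assume "i < N" "j < N"
    moreover have "[:0,1:] dvd [:0, - c:]" for c :: int
      by (rule dvdI[of _ _ "[:-c:]"]) simp
    ultimately show "[:0,1:] dvd Mt N A $$ (i,j) - 1\<^sub>m N $$ (i,j)"
      by (auto simp: Mt_index[OF A])
  qed auto
  hence "poly (det (Mt N A) - 1) 0 = 0" by (simp add: dvd_iff_poly_eq_0)
  thus ?thesis by (simp add: det_Mt[OF A] poly_0_coeff_0)
qed

lemma Mt_one: "Mt N (1\<^sub>m N) = [:1,-1:] \<cdot>\<^sub>m 1\<^sub>m N"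
  unfolding Mt_def by (rule eq_matI) (auto simp: one_pCons)

lemma det_Mt_one: "det_one_minus_t (1\<^sub>m N) = [:1,-1:] ^ N"
  using det_Mt[of "1\<^sub>m N" N] Mt_one[of N] by simp

lemma coeff_lin_pow: "coeff ([:1,a:] ^ n) 0 = 1 \<and> coeff ([:1,a:] ^ n) 1 = of_nat n * a"
  by (induction n) (auto simp: mult_pCons_left algebra_simps)




fun hor :: "nat \<Rightarrow> int mat \<Rightarrow> (nat \<Rightarrow> int) \<Rightarrow> nat \<Rightarrow> int mat" where
  "hor N A c 0 = c 0 \<cdot>\<^sub>m 1\<^sub>m N"
| "hor N A c (Suc K) = hor N A c K * A + c (Suc K) \<cdot>\<^sub>m 1\<^sub>m N"

lemma hor_carrier: "A \<in> carrier_mat N N \<Longrightarrow> hor N A c K \<in> carrier_mat N N"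
  by (induction K) auto

lemma CH: assumes A: "A \<in> carrier_mat N N" and N: "N \<ge> 1"
  shows "hor N A (coeff (det_one_minus_t A)) N = 0\<^sub>m N N"
proof -
  define M where "M = Mt N A"
  define d where "d = det M"
  define adj where "adj = adj_mat M"
  define C where "C k = map_mat (\<lambda>q. coeff q k) adj" for k
  have M: "M \<in> carrier_mat N N" unfolding M_def using Mt_carrier[OF A] .
  have adjc: "adj \<in> carrier_mat N N" unfolding adj_def using adj_mat(1)[OF M] .
  have Madj: "adj * M = d \<cdot>\<^sub>m 1\<^sub>m N" unfolding adj_def d_def using adj_mat(3)[OF M] .
  have dd: "det_one_minus_t A = d" unfolding d_def M_def using det_Mt[OF A] .
  have Cc: "C k \<in> carrier_mat N N" for k unfolding C_def using adjc by auto
  have ent: "(adj * M) $$ (i,j) = (\<Sum>m<N. M $$ (m,j) * adj $$ (i,m))" if "i < N" "j < N" for i j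
    using that M adjc by (auto simp: scalar_prod_def mult.commute lessThan_atLeast0 intro!: sum.cong)
  have trm: "M $$ (m,j) * q = (if m = j then q else 0) - pCons 0 (smult (A $$ (m,j)) q)"
    if "j < N" "m < N" for j m q
    using that by (auto simp: Mt_index[OF A] M_def algebra_simps mult_pCons_left)
  have coeffent0: "coeff ((adj * M) $$ (i,j)) 0 = C 0 $$ (i,j)" if "i < N" "j < N" for i j
  proof -
    have "coeff ((adj * M) $$ (i,j)) 0 = (\<Sum>m<N. coeff (M $$ (m,j) * adj $$ (i,m)) 0)"
      by (simp add: ent[OF that] coeff_sum)
    also have "\<dots> = (\<Sum>m<N. if m = j then coeff (adj $$ (i,m)) 0 else 0)"
      by (rule sum.cong[OF refl]) (use that in \<open>auto simp: trm\<close>)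
    also have "\<dots> = C 0 $$ (i,j)" using that adjc by (simp add: C_def)
    finally show ?thesis .
  qed
  have coeffentS: "coeff ((adj * M) $$ (i,j)) (Suc k) = C (Suc k) $$ (i,j) - (C k * A) $$ (i,j)"
    if "i < N" "j < N" for i j k
  proof -
    have "coeff ((adj * M) $$ (i,j)) (Suc k) = (\<Sum>m<N. coeff (M $$ (m,j) * adj $$ (i,m)) (Suc k))"
      by (simp add: ent[OF that] coeff_sum)
    also have "\<dots> = (\<Sum>m<N. (if m = j then coeff (adj $$ (i,m)) (Suc k) else 0) - coeff (adj $$ (i,m)) k * A $$ (m,j))"
      by (rule sum.cong[OF refl]) (use that in \<open>auto simp: trm\<close>)
    also have "\<dots> = C (Suc k) $$ (i,j) - (C k * A) $$ (i,j)" using that adjc A Cc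
      by (simp add: C_def sum_subtractf scalar_prod_def lessThan_atLeast0)
    finally show ?thesis .
  qed
  have C0: "C 0 = coeff d 0 \<cdot>\<^sub>m 1\<^sub>m N"
  proof (rule eq_matI)
    fix i j assume ij: "i < dim_row (coeff d 0 \<cdot>\<^sub>m 1\<^sub>m N)" "j < dim_col (coeff d 0 \<cdot>\<^sub>m 1\<^sub>m N)"
    hence "C 0 $$ (i,j) = coeff ((adj * M) $$ (i,j)) 0" using coeffent0 by simp
    also have "\<dots> = (coeff d 0 \<cdot>\<^sub>m 1\<^sub>m N) $$ (i,j)" using ij unfolding Madj by auto
    finally show "C 0 $$ (i,j) = (coeff d 0 \<cdot>\<^sub>m 1\<^sub>m N) $$ (i,j)" .
  qed (use Cc in auto)
  have CS: "C (Suc k) = C k * A + coeff d (Suc k) \<cdot>\<^sub>m 1\<^sub>m N" for k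
  proof (rule eq_matI)
    fix i j assume ij: "i < dim_row (C k * A + coeff d (Suc k) \<cdot>\<^sub>m 1\<^sub>m N)" "j < dim_col (C k * A + coeff d (Suc k) \<cdot>\<^sub>m 1\<^sub>m N)"
    hence ij': "i < N" "j < N" by auto
    have "C (Suc k) $$ (i,j) = coeff ((adj * M) $$ (i,j)) (Suc k) + (C k * A) $$ (i,j)"
      using coeffentS[OF ij'] by simp
    also have "\<dots> = (C k * A + coeff d (Suc k) \<cdot>\<^sub>m 1\<^sub>m N) $$ (i,j)"
      using ij' A Cc[of k] unfolding Madj by auto
    finally show "C (Suc k) $$ (i,j) = (C k * A + coeff d (Suc k) \<cdot>\<^sub>m 1\<^sub>m N) $$ (i,j)" .
  qed (use Cc A in auto)
  have horC: "hor N A (coeff d) K = C K" for K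
    by (induction K) (auto simp: C0 CS)
  have CN: "C N = 0\<^sub>m N N"
  proof (rule eq_matI)
    fix i j assume ij: "i < dim_row (0\<^sub>m N N :: int mat)" "j < dim_col (0\<^sub>m N N :: int mat)"
    hence ij': "i < N" "j < N" by auto
    have md: "mat_delete M j i \<in> carrier_mat (N-1) (N-1)" using mat_delete_carrier[OF M] .
    have "degree (det (mat_delete M j i)) \<le> 1 * (N - 1)"
    proof (rule degree_det_le[OF _ md])
      fix a b assume ab: "a < N - 1" "b < N - 1"
      have dM: "degree (M $$ (x,y)) \<le> 1" if "x < N" "y < N" for x y
      proof -
        have "degree ((if x = y then 1 else 0) - [:0, A $$ (x,y):]) \<le> 1"
          by (rule order.trans[OF degree_diff_le]) auto
        thus ?thesis using that by (simp add: Mt_index[OF A] M_def)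
      qed
      have "mat_delete M j i $$ (a,b) = M $$ (if a < j then a else Suc a, if b < i then b else Suc b)"
        using ab M unfolding mat_delete_def by auto
      thus "degree (mat_delete M j i $$ (a,b)) \<le> 1" using dM ab by auto
    qed
    moreover have "degree ((-1::int poly) ^ (j+i)) = 0"
      using degree_power_le[of "-1::int poly" "j+i"] by simp
    ultimately have "degree ((-1::int poly) ^ (j+i) * det (mat_delete M j i)) < N"
      using N by (intro le_less_trans[OF degree_mult_le]) auto
    hence "degree (adj $$ (i,j)) < N" using ij' M N unfolding adj_def adj_mat_def cofactor_def
      by (auto simp: add.commute)
    hence "coeff (adj $$ (i,j)) N = 0" by (simp add: coeff_eq_0)
    thus "C N $$ (i,j) = 0\<^sub>m N N $$ (i,j)" using ij' adjc by (simp add: C_def)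
  qed (use Cc in auto)
  show ?thesis using horC[of N] CN dd by simp
qed




lemma coeff_lin0: "coeff (q * [:1,-a:]) 0 = coeff q 0" for q :: "int poly"
  by (simp add: mult.commute[of q] mult_pCons_left)
lemma coeff_linS: "coeff (q * [:1,-a:]) (Suc k) = coeff q (Suc k) - a * coeff q k" for q :: "int poly"
  by (simp add: mult.commute[of q] mult_pCons_left)

lemma smult_zero_mat_l: "(0::int) \<cdot>\<^sub>m 1\<^sub>m N = 0\<^sub>m N N"
  by (rule eq_matI) auto

lemma hor_lin: assumes A: "A \<in> carrier_mat N N"
  fixes q :: "int poly"
  shows "hor N A (coeff (q * [:1,-a:])) (Suc K) =
     hor N A (coeff q) K * (A - a \<cdot>\<^sub>m 1\<^sub>m N) + coeff q (Suc K) \<cdot>\<^sub>m 1\<^sub>m N"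
proof (induction K)
  case 0
  show ?case
  proof -
    have o: "(c \<cdot>\<^sub>m 1\<^sub>m N) * X = c \<cdot>\<^sub>m X" if "X \<in> carrier_mat N N" for X and c :: int
      using that by (simp add: mult_smult_assoc_mat[of _ N N])
    have B: "A - a \<cdot>\<^sub>m 1\<^sub>m N \<in> carrier_mat N N" using A by auto
    have "hor N A (coeff (q * [:1,-a:])) (Suc 0) = (coeff q 0 \<cdot>\<^sub>m 1\<^sub>m N) * A + (coeff q 1 - a * coeff q 0) \<cdot>\<^sub>m 1\<^sub>m N"
      by (simp add: coeff_lin0 coeff_linS[of q a 0, simplified])
    also have "\<dots> = coeff q 0 \<cdot>\<^sub>m A + (coeff q 1 - a * coeff q 0) \<cdot>\<^sub>m 1\<^sub>m N" using o[OF A] by simp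
    also have "\<dots> = coeff q 0 \<cdot>\<^sub>m (A - a \<cdot>\<^sub>m 1\<^sub>m N) + coeff q (Suc 0) \<cdot>\<^sub>m 1\<^sub>m N"
      by (rule eq_matI) (use A in \<open>auto simp: algebra_simps\<close>)
    also have "\<dots> = hor N A (coeff q) 0 * (A - a \<cdot>\<^sub>m 1\<^sub>m N) + coeff q (Suc 0) \<cdot>\<^sub>m 1\<^sub>m N"
      using o[OF B] by simp
    finally show ?thesis .
  qed
next
  case (Suc K)
  define h where "h = hor N A (coeff q) K"
  define B where "B = A - a \<cdot>\<^sub>m 1\<^sub>m N"
  have h: "h \<in> carrier_mat N N" unfolding h_def using hor_carrier[OF A] .
  have B: "B \<in> carrier_mat N N" unfolding B_def using A by auto
  have BA: "B * A = A * B" unfolding B_def using A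
    by (simp add: minus_mult_distrib_mat[of _ N N] mult_minus_distrib_mat[of _ N N]
        mult_smult_assoc_mat[of _ N N] mult_smult_distrib[OF A one_carrier_mat])
  have e1: "(h * B + coeff q (Suc K) \<cdot>\<^sub>m 1\<^sub>m N) * A = h * (A * B) + coeff q (Suc K) \<cdot>\<^sub>m A"
    using h B A BA by (simp add: add_mult_distrib_mat[of _ N N] mult_smult_assoc_mat[of _ N N])
  have e2: "(h * A + coeff q (Suc K) \<cdot>\<^sub>m 1\<^sub>m N) * B = h * (A * B) + coeff q (Suc K) \<cdot>\<^sub>m B"
    using h B A by (simp add: add_mult_distrib_mat[of _ N N] mult_smult_assoc_mat[of _ N N])
  have "hor N A (coeff (q * [:1,-a:])) (Suc (Suc K)) =
        (h * B + coeff q (Suc K) \<cdot>\<^sub>m 1\<^sub>m N) * A + coeff (q * [:1,-a:]) (Suc (Suc K)) \<cdot>\<^sub>m 1\<^sub>m N"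
  proof -
    have "hor N A (coeff (q * [:1,-a:])) (Suc (Suc K)) = hor N A (coeff (q * [:1,-a:])) (Suc K) * A + coeff (q * [:1,-a:]) (Suc (Suc K)) \<cdot>\<^sub>m 1\<^sub>m N"
      by (simp only: hor.simps)
    also have "\<dots> = (h * B + coeff q (Suc K) \<cdot>\<^sub>m 1\<^sub>m N) * A + coeff (q * [:1,-a:]) (Suc (Suc K)) \<cdot>\<^sub>m 1\<^sub>m N"
      by (simp only: Suc.IH h_def[symmetric] B_def[symmetric])
    finally show ?thesis .
  qed
  also have "\<dots> = (h * A + coeff q (Suc K) \<cdot>\<^sub>m 1\<^sub>m N) * B + coeff q (Suc (Suc K)) \<cdot>\<^sub>m 1\<^sub>m N"
    unfolding e1 e2 coeff_linS
    by (rule eq_matI) (use h A B in \<open>auto simp: B_def algebra_simps\<close>)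
  finally show ?case by (simp only: hor.simps h_def B_def)
qed

lemma hor_pow: assumes A: "A \<in> carrier_mat N N"
  shows "hor N A (coeff ([:1,-a:] ^ n)) n = (A - a \<cdot>\<^sub>m 1\<^sub>m N) ^\<^sub>m n"
proof (induction n)
  case 0
  then show ?case using A by (auto intro!: eq_matI)
next
  case (Suc n)
  have d1: "degree [:1,-a:] \<le> 1" by (simp add: degree_pCons_le)
  have deg: "degree ([:1,-a:] ^ n) \<le> n" using degree_power_le[of "[:1,-a:]" n] d1
    by (metis mult_1 mult_le_mono1 order.trans)
  have "hor N A (coeff ([:1,-a:] ^ Suc n)) (Suc n) = hor N A (coeff ([:1,-a:] ^ n * [:1,-a:])) (Suc n)"
    by (simp add: mult.commute)
  also have "\<dots> = hor N A (coeff ([:1,-a:] ^ n)) n * (A - a \<cdot>\<^sub>m 1\<^sub>m N) + coeff ([:1,-a:] ^ n) (Suc n) \<cdot>\<^sub>m 1\<^sub>m N"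
    by (rule hor_lin[OF A])
  also have "\<dots> = hor N A (coeff ([:1,-a:] ^ n)) n * (A - a \<cdot>\<^sub>m 1\<^sub>m N)"
  proof -
    have X: "hor N A (coeff ([:1,-a:] ^ n)) n * (A - a \<cdot>\<^sub>m 1\<^sub>m N) \<in> carrier_mat N N"
      using hor_carrier[OF A] A by (intro mult_carrier_mat[of _ N N]) auto
    show ?thesis using deg by (simp add: coeff_eq_0 smult_zero_mat_l right_add_zero_mat[OF X])
  qed
  finally show ?case using Suc.IH by (simp only: pow_mat.simps)
qed

lemma mat_cong_add: "A \<in> carrier_mat nr nc \<Longrightarrow> A' \<in> carrier_mat nr nc \<Longrightarrow> B \<in> carrier_mat nr nc \<Longrightarrow> B' \<in> carrier_mat nr nc
  \<Longrightarrow> mat_cong A A' m \<Longrightarrow> mat_cong B B' m \<Longrightarrow> mat_cong (A + B) (A' + B') m"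
  unfolding mat_cong_def by (auto intro: cong_add)

lemma mat_cong_mult: "A \<in> carrier_mat nr n \<Longrightarrow> A' \<in> carrier_mat nr n \<Longrightarrow> B \<in> carrier_mat n nc \<Longrightarrow> B' \<in> carrier_mat n nc
  \<Longrightarrow> mat_cong A A' m \<Longrightarrow> mat_cong B B' m \<Longrightarrow> mat_cong (A * B) (A' * B') m"
  unfolding mat_cong_def by (auto simp: scalar_prod_def intro!: cong_sum cong_mult)

lemma mat_cong_smult: "[a = b] (mod m) \<Longrightarrow> mat_cong (a \<cdot>\<^sub>m 1\<^sub>m N) (b \<cdot>\<^sub>m 1\<^sub>m N) m"
  unfolding mat_cong_def by (auto intro: cong_mult)

lemma hor_cong: assumes A: "A \<in> carrier_mat N N" and A': "A' \<in> carrier_mat N N"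
  and AA: "mat_cong A A' m" and cc: "\<And>k. k \<le> K \<Longrightarrow> [c k = c' k] (mod m)"
  shows "mat_cong (hor N A c K) (hor N A' c' K) m"
  using cc
proof (induction K)
  case 0 then show ?case by (simp add: mat_cong_smult)
next
  case (Suc K)
  show ?case
    by (simp, rule mat_cong_add[of _ N N])
      (use Suc A A' AA hor_carrier[OF A] hor_carrier[OF A'] in \<open>auto intro!: mat_cong_mult[of _ N N] mat_cong_smult mult_carrier_mat[of _ N N]\<close>)
qed




lemma coeff_recip: "coeff (recip_poly N P) j = (if j \<le> N then coeff P (N - j) else 0)"
proof -
  have "coeff (recip_poly N P) j = (\<Sum>k\<le>N. if N - k = j then coeff P k else 0)"
    unfolding recip_poly_def coeff_sum coeff_monom by simp
  also have "\<dots> = (\<Sum>k\<in>(if j \<le> N then {N - j} else {}). coeff P k)"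
    by (rule sum.mono_neutral_cong_right) (auto split: if_splits)
  also have "\<dots> = (if j \<le> N then coeff P (N - j) else 0)" by simp
  finally show ?thesis .
qed

lemma deg_prod_lin: "degree (\<Prod>i<n. [:-r i, 1:]) \<le> n" for r :: "nat \<Rightarrow> complex"
proof -
  have "degree (\<Prod>i<n. [:-r i, 1:]) \<le> (\<Sum>i<n. degree [:-r i, 1:])" using degree_prod_sum_le[of "{..<n}" "\<lambda>i. [:-r i, 1:]"] by (simp add: o_def)
  also have "\<dots> = n" by simp
  finally show ?thesis .
qed

lemma vieta: fixes r :: "nat \<Rightarrow> complex"
  shows "coeff (\<Prod>i<n. [:-r i, 1:]) n = 1 \<and> coeff (\<Prod>i<Suc n. [:-r i, 1:]) n = - (\<Sum>i<Suc n. r i)"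
proof (induction n)
  case 0 then show ?case by simp
next
  case (Suc n)
  have cs: "coeff (q * [:-a, 1:]) (Suc k) = coeff q k - a * coeff q (Suc k)" for q :: "complex poly" and a k
    by (simp add: mult.commute[of q] mult_pCons_left)
  have z1: "coeff (\<Prod>i<n. [:-r i, 1:]) (Suc n) = 0" using deg_prod_lin[of r n] by (simp add: coeff_eq_0)
  have p1: "coeff (\<Prod>i<Suc n. [:-r i, 1:]) (Suc n) = 1"
    using Suc.IH z1 by (simp only: prod.lessThan_Suc[of _ n] cs) simp
  have p2: "coeff (\<Prod>i<Suc (Suc n). [:-r i, 1:]) (Suc n) = - (\<Sum>i<Suc (Suc n). r i)"
    using Suc.IH p1 by (simp only: prod.lessThan_Suc[of _ "Suc n"] cs) (simp add: sum.lessThan_Suc[of _ "Suc n"])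
  show ?case using p1 p2 by blast
qed




lemma numpart:
  fixes l p :: nat and P :: "int poly"
  assumes l_gt: "l > 44" and p0: "p > 0"
    and b0: "coeff P 0 = 1"
    and b1l: "[coeff P 1 = -22] (mod int l)"
    and pl: "[int p = 1] (mod int l)"
    and iv: "\<forall>z::complex. poly (map_poly of_int (recip_poly 22 P)) z = 0 \<longrightarrow> cmod z = real p"
    and v: "int p dvd coeff P 1"
  shows "recip_poly 22 P = [:- int p, 1:] ^ 22"
proof -
  define Q where "Q = recip_poly 22 P"
  define Qc where "Qc = (map_poly of_int Q :: complex poly)"
  have cQ: "coeff Q j = (if j \<le> 22 then coeff P (22 - j) else 0)" for j
    unfolding Q_def by (rule coeff_recip)
  have cQc: "coeff Qc j = of_int (coeff Q j)" for j unfolding Qc_def by (simp add: coeff_map_poly)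
  have dQc: "degree Qc = 22"
  proof (rule order_antisym)
    show "degree Qc \<le> 22" by (rule degree_le) (auto simp: cQc cQ)
    show "22 \<le> degree Qc" by (rule le_degree) (simp add: cQc cQ b0)
  qed
  have lQc: "coeff Qc 22 = 1" by (simp add: cQc cQ b0)
  obtain r where r: "smult (lead_coeff Qc) (\<Prod>i<degree Qc. [:-r i, 1:]) = Qc"
    using complex_poly_decompose' by blast
  hence "smult 1 (\<Prod>i<22. [:-r i, 1:]) = Qc" by (simp only: dQc lQc)
  hence Qr: "Qc = (\<Prod>i<22. [:-r i, 1:])" by (simp only: smult_1_left)
  have rootr: "cmod (r i) = real p" if "i < 22" for i
  proof -
    have "poly Qc (r i) = (\<Prod>j<22. poly [:-r j, 1:] (r i))" unfolding Qr by (rule poly_prod)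
    also have "\<dots> = 0"
      by (rule prod_zero[OF finite_lessThan], rule bexI[of _ i]) (use that in simp_all)
    finally have "poly (map_poly of_int (recip_poly 22 P)) (r i) = 0" by (simp only: Qc_def Q_def)
    thus ?thesis by (rule iv[rule_format])
  qed
  have "coeff Qc 21 = - (\<Sum>i<22. r i)" using vieta[of r 21] Qr by simp
  hence sumr: "(\<Sum>i<22. r i) = - of_int (coeff P 1)" by (simp add: cQc cQ)
  obtain c where c: "coeff P 1 = int p * c" using v by blast
  have "real_of_int \<bar>coeff P 1\<bar> = cmod (\<Sum>i<22. r i)"
    unfolding sumr by simp
  also have "\<dots> \<le> (\<Sum>i<22. cmod (r i))" by (rule norm_sum)
  also have "\<dots> = 22 * real p" using rootr by simp
  finally have "real p * \<bar>real_of_int c\<bar> \<le> real p * 22" unfolding c by (simp add: abs_mult)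
  hence cb: "\<bar>c\<bar> \<le> 22" using p0 by (simp add: mult_le_cancel_left)
  have "[int p * c = 1 * c] (mod int l)" by (rule cong_mult[OF pl cong_refl])
  hence "[c = -22] (mod int l)" using b1l c by (metis cong_sym cong_trans mult_1)
  hence "int l dvd c + 22" by (simp add: cong_iff_dvd_diff)
  hence c22: "c = -22"
  proof -
    assume d: "int l dvd c + 22"
    show ?thesis
    proof (rule ccontr)
      assume "c \<noteq> -22"
      hence "c + 22 > 0" "c + 22 \<le> 44" using cb by auto
      hence "int l \<le> c + 22" using d by (simp add: zdvd_imp_le)
      thus False using l_gt \<open>c + 22 \<le> 44\<close> by linarith
    qed
  qed
  have sr: "(\<Sum>i<22. r i) = of_nat (22 * p)" using sumr c c22 by simp
  have Rer: "Re (r i) = real p" if "i < 22" for i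
  proof -
    have "(\<Sum>i<22. real p - Re (r i)) = 0"
      using arg_cong[OF sr, of Re] by (simp add: sum_subtractf Re_sum)
    moreover have "\<forall>i\<in>{..<22}. 0 \<le> real p - Re (r i)"
    proof
      fix i assume "i \<in> {..<22::nat}"
      thus "0 \<le> real p - Re (r i)" using rootr[of i] complex_Re_le_cmod[of "r i"] by simp
    qed
    ultimately have "\<forall>i\<in>{..<22}. real p - Re (r i) = 0"
      using sum_nonneg_eq_0_iff[OF finite_lessThan[of 22], of "\<lambda>i. real p - Re (r i)"] by blast
    thus ?thesis using that by auto
  qed
  have rp: "r i = of_nat p" if "i < 22" for i
  proof -
    have "(cmod (r i))\<^sup>2 = (Re (r i))\<^sup>2 + (Im (r i))\<^sup>2" by (rule cmod_power2)
    hence "Im (r i) = 0" using rootr[OF that] Rer[OF that] by simp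
    thus ?thesis using Rer[OF that] by (simp add: complex_eq_iff)
  qed
  have "Qc = (\<Prod>i\<in>{..<22::nat}. [:- (of_nat p :: complex), 1:])" unfolding Qr by (rule prod.cong) (auto simp: rp)
  also have "\<dots> = [:- (of_nat p :: complex), 1:] ^ 22" by (simp only: prod_constant card_lessThan)
  also have "\<dots> = map_poly of_int ([:- int p, 1:] ^ 22)"
  proof -
    interpret m: map_poly_comm_ring_hom "of_int :: int \<Rightarrow> complex" ..
    have "map_poly (of_int :: int \<Rightarrow> complex) [:- int p, 1:] = [:- (of_nat p :: complex), 1:]" by (rule poly_eqI) (simp add: coeff_map_poly coeff_pCons split: nat.split)
    moreover have "map_poly (of_int :: int \<Rightarrow> complex) (q ^ n) = map_poly of_int q ^ n" for q n
      by (induction n) (simp_all add: hom_distribs)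
    ultimately show ?thesis by simp
  qed
  finally have eq: "map_poly (of_int :: int \<Rightarrow> complex) Q = map_poly of_int ([:- int p, 1:] ^ 22)"
    unfolding Qc_def .
  show ?thesis unfolding Q_def[symmetric]
  proof (rule poly_eqI)
    fix j
    have "(of_int (coeff Q j) :: complex) = of_int (coeff ([:- int p, 1:] ^ 22) j)"
      using arg_cong[OF eq, of "\<lambda>q. coeff q j"] by (simp only: coeff_map_poly of_int_0)
    thus "coeff Q j = coeff ([:- int p, 1:] ^ 22) j" by (simp only: of_int_eq_iff)
  qed
qed




lemma zero_of_pows: fixes x :: int and l :: nat
  assumes l: "l \<ge> 2" and d: "\<And>n. int l ^ n dvd x" shows "x = 0"
proof (rule ccontr)
  assume x: "x \<noteq> 0"
  define n where "n = nat \<bar>x\<bar>"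
  have h1: "\<bar>int l ^ n\<bar> \<le> \<bar>x\<bar>" by (rule dvd_imp_le_int[OF x d])
  have h2: "n < 2 ^ n" by (rule less_exp)
  have h3: "(2::nat) ^ n \<le> l ^ n" using l by (rule power_mono) simp
  have "n < l ^ n" using h2 h3 by linarith
  hence "int n < int (l ^ n)" by (simp only: of_nat_less_iff)
  hence "\<bar>x\<bar> < int l ^ n" unfolding n_def by simp
  moreover have "\<bar>int l ^ n\<bar> = int l ^ n" by simp
  ultimately show False using h1 by linarith
qed

lemma mat_cong_refl: "mat_cong A A m" unfolding mat_cong_def by auto

lemma reflect_lin: "(a::int) \<noteq> 0 \<Longrightarrow> reflect_poly [:a,1:] = [:1,a:]"
  by (rule poly_eqI) (auto simp: coeff_reflect_poly coeff_pCons split: nat.split)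

theorem lemma3p3:
  fixes l p :: nat and U :: "nat \<Rightarrow> int mat" and P :: "int poly"
  assumes l_prime: "prime l" and l_gt: "l > 44" and p_prime: "prime p"
    and U_zl: "zl_matrix l 22 U"
    and i: "l dvd p - 1"
    and ii: "mat_cong (U 1) (1\<^sub>m 22) (int l)"
    and iii: "\<forall>n k. [coeff (det_one_minus_t (U n)) k = coeff P k] (mod (int l ^ n))"
    and iv: "\<forall>z::complex. poly (map_poly of_int (recip_poly 22 P)) z = 0 \<longrightarrow> cmod z = real p"
    and v: "int p dvd coeff P 1"
  shows "\<exists>m. \<forall>n. mat_cong ((U n - of_nat p \<cdot>\<^sub>m 1\<^sub>m 22) ^\<^sub>m m) (0\<^sub>m 22 22) (int l ^ n)"
proof -
  have Uc: "U n \<in> carrier_mat 22 22" for n using U_zl unfolding zl_matrix_def by auto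
  have l2: "l \<ge> 2" using l_gt by simp
  have p2: "p \<ge> 2" using p_prime prime_ge_2_nat by blast
  have b0: "coeff P 0 = 1"
  proof -
    have "int l ^ n dvd coeff P 0 - 1" for n
      using iii[rule_format, of n 0] coeff0_det[OF Uc[of n]] by (simp add: cong_iff_dvd_diff dvd_diff_commute)
    thus ?thesis using zero_of_pows[OF l2, of "coeff P 0 - 1"] by simp
  qed
  have b1l: "[coeff P 1 = -22] (mod int l)"
  proof -
    have "[:int l:] dvd det (Mt 22 (U 1)) - det (Mt 22 (1\<^sub>m 22))"
    proof (rule det_dvd_diff[OF Mt_carrier[OF Uc[of 1]] Mt_carrier])
      fix a b :: nat assume ij: "a < 22" "b < 22"
      obtain k where k: "U 1 $$ (a,b) - (1\<^sub>m 22) $$ (a,b) = int l * k"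
        using ii ij Uc[of 1] unfolding mat_cong_def cong_iff_dvd_diff by (auto elim!: dvdE)
      have "Mt 22 (U 1) $$ (a,b) - Mt 22 (1\<^sub>m 22) $$ (a,b) = [:0, (1\<^sub>m 22) $$ (a,b) - U 1 $$ (a,b):]"
        using ij Uc[of 1] by (simp add: Mt_index)
      also have "\<dots> = [:int l:] * [:0, -k:]" using k by (simp add: algebra_simps)
      finally show "[:int l:] dvd Mt 22 (U 1) $$ (a,b) - Mt 22 (1\<^sub>m 22) $$ (a,b)" by (simp only: dvd_triv_left)
    qed auto
    hence "int l dvd coeff (det_one_minus_t (U 1) - [:1,-1:] ^ 22) 1"
      using det_Mt[OF Uc[of 1]] det_Mt[of "1\<^sub>m 22" 22] det_Mt_one[of 22]
      by (simp add: const_poly_dvd_iff)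
    hence "[coeff (det_one_minus_t (U 1)) 1 = -22] (mod int l)"
      using coeff_lin_pow[of "-1::int" 22] by (simp add: cong_iff_dvd_diff)
    moreover have "[coeff (det_one_minus_t (U 1)) 1 = coeff P 1] (mod int l)"
      using iii[rule_format, of 1 1] by simp
    ultimately show ?thesis by (metis cong_sym cong_trans)
  qed
  have pl: "[int p = 1] (mod int l)"
  proof -
    have "int l dvd int (p - 1)" using i by simp
    thus ?thesis using p2 by (simp add: cong_iff_dvd_diff of_nat_diff)
  qed
  have Q: "recip_poly 22 P = [:- int p, 1:] ^ 22"
    by (rule numpart[OF l_gt _ b0 b1l pl iv v]) (use p2 in simp)
  have cP: "coeff P k = coeff ([:1, - int p:] ^ 22) k" if "k \<le> 22" for k
  proof -
    have "coeff P k = coeff (recip_poly 22 P) (22 - k)" using that by (simp add: coeff_recip)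
    also have "\<dots> = coeff ([:- int p, 1:] ^ 22) (22 - k)" by (simp only: Q)
    also have "\<dots> = coeff (reflect_poly ([:- int p, 1:] ^ 22)) k"
      using that by (simp add: coeff_reflect_poly degree_linear_power)
    also have "reflect_poly ([:- int p, 1:] ^ 22) = [:1, - int p:] ^ 22"
      using p2 by (simp add: reflect_poly_power reflect_lin)
    finally show ?thesis .
  qed
  show ?thesis
  proof (intro exI allI)
    fix n
    have "mat_cong (hor 22 (U n) (coeff ([:1, - int p:] ^ 22)) 22) (hor 22 (U n) (coeff (det_one_minus_t (U n))) 22) (int l ^ n)"
      by (rule hor_cong[OF Uc Uc mat_cong_refl]) (subst cP[symmetric], assumption, rule cong_sym, rule iii[rule_format])
    thus "mat_cong ((U n - of_nat p \<cdot>\<^sub>m 1\<^sub>m 22) ^\<^sub>m 22) (0\<^sub>m 22 22) (int l ^ n)"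
      using hor_pow[OF Uc[of n], of "int p" 22] CH[OF Uc[of n]] by simp
  qed
qed


end
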